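(* Let $\nu\in\mathbb C$ with $q^{2\nu+2i}\ne1$ for all integers $i\ge0$. For integers $m\ge0$ define the polynomial in $1/x$ $$r_{m,\nu}(x;q^2)=\sum_{i=0}^{\lfloor m/2\rfloor}\frac{a_i(\nu,m)}{x^{m-2i}}q^{-i(i+1)},\qquad a_i(\nu,m)=q^{-m(m+\nu)}q^{i(3i+\nu-1)}\frac{(-1)^i(q^{2\nu};q^2)_{m-i}(q^2;q^2)_{m-i}}{(q^2;q^2)_i(q^{2\nu};q^2)_i(q^2;q^2)_{m-2i}}.$$ Then $r_{0,\nu}=1$, $r_{1,\nu}(x;q^2)=q^{-(\nu+1)}(1-q^{2\nu})x^{-1}$, and for all $m\ge1$ and $x\ne0$, $$q^{2m}r_{m+1,\nu}(x;q^2)=q^{-(\nu+1)}\frac{1-q^{2(\nu+m)}}{x}r_{m,\nu}(x;q^2)-q^{-(\nu+2)}r_{m-1,\nu}(x;q^2).$$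
   Context: Fix $0<q<1$; $(a;q)_0=1$, $(a;q)_k=\prod_{i=0}^{k-1}(1-aq^i)$. $\lfloor a\rfloor$ is the largest integer $\le a$. *)

theory Defs
  imports "HOL-Analysis.Analysis"
begin

definition qpoch :: "complex \<Rightarrow> complex \<Rightarrow> nat \<Rightarrow> complex" where
  "qpoch a q k = (\<Prod>i<k. 1 - a * q ^ i)"

definition qpow :: "real \<Rightarrow> complex \<Rightarrow> complex" where
  "qpow q z = exp (z * of_real (ln q))"

definition a_coef :: "real \<Rightarrow> complex \<Rightarrow> nat \<Rightarrow> nat \<Rightarrow> complex" where
  "a_coef q \<nu> m i =
     qpow q (- (of_nat m * (of_nat m + \<nu>))) * qpow q (of_nat i * (3 * of_nat i + \<nu> - 1)) *
     ((-1) ^ i * qpoch (qpow q (2 * \<nu>)) (of_real (q^2)) (m - i) * qpoch (of_real (q^2)) (of_real (q^2)) (m - i)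
      / (qpoch (of_real (q^2)) (of_real (q^2)) i * qpoch (qpow q (2 * \<nu>)) (of_real (q^2)) i
         * qpoch (of_real (q^2)) (of_real (q^2)) (m - 2 * i)))"

definition r_poly :: "real \<Rightarrow> complex \<Rightarrow> nat \<Rightarrow> complex \<Rightarrow> complex" where
  "r_poly q \<nu> m x = (\<Sum>i = 0..m div 2. a_coef q \<nu> m i / x ^ (m - 2 * i) * qpow q (- of_nat (i * (i + 1))))"

end

theory Submission
  imports Defs
begin
lemma qpow_add: "qpow q (a + b) = qpow q a * qpow q b"
  by (simp add: qpow_def distrib_right exp_add)
lemma qpow_nat: "0 < q \<Longrightarrow> qpow q (of_nat n) = of_real (q ^ n)"
proof -
  assume "0 < q"
  then have "exp (complex_of_real (ln q)) = complex_of_real q" by (simp add: exp_of_real)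
  then show ?thesis unfolding qpow_def by (simp add: exp_of_nat_mult)
qed
lemma qpow_0[simp]: "qpow q 0 = 1" by (simp add: qpow_def)
lemma qpow_nz: "qpow q z \<noteq> 0" by (simp add: qpow_def)
lemma qpoch_Suc: "qpoch a Q (Suc n) = qpoch a Q n * (1 - a * Q ^ n)"
  by (simp add: qpoch_def)
lemma qpoch_0[simp]: "qpoch a Q 0 = 1" by (simp add: qpoch_def)
lemma qpoch_nz: "(\<And>j. j < n \<Longrightarrow> a * Q ^ j \<noteq> 1) \<Longrightarrow> qpoch a Q n \<noteq> 0"
  unfolding qpoch_def by (auto simp: prod_zero_iff)

definition PP :: "complex \<Rightarrow> complex \<Rightarrow> nat \<Rightarrow> nat \<Rightarrow> complex" where
  "PP A Q m i = (-1)^i * qpoch A Q (m-i) * qpoch Q Q (m-i) / (qpoch Q Q i * qpoch A Q i * qpoch Q Q (m-2*i))"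
definition ww :: "complex \<Rightarrow> nat \<Rightarrow> nat \<Rightarrow> complex" where
  "ww \<nu> m i = -(of_nat m * (of_nat m + \<nu>)) + of_nat i * (3 * of_nat i + \<nu> - 1) + - of_nat (i*(i+1))"

lemma c_eq: "a_coef q \<nu> m i * qpow q (- of_nat (i*(i+1))) = qpow q (ww \<nu> m i) * PP (qpow q (2*\<nu>)) (of_real (q^2)) m i"
  unfolding a_coef_def PP_def ww_def qpow_add by simp

lemma P_alg:
  fixes a b aj qj qk s X Xb M QZ u1 v1 w1 :: complex
  assumes "a \<noteq> 0" "b \<noteq> 0" "aj \<noteq> 0" "qj \<noteq> 0" "qk \<noteq> 0" "u1 \<noteq> 0" "v1 \<noteq> 0" "w1 \<noteq> 0"
    and eq: "X * Xb = M * w1 + QZ * u1 * v1"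
  shows "- s * (a*X) * (b*Xb) / ((qj*u1) * (aj* v1) * (qk*w1))
     = M * (- s * a * b / ((qj*u1) * (aj* v1) * qk)) - QZ * (s * a * b / (qj * aj * (qk*w1)))"
proof -
  have "- s * (a*X) * (b*Xb) / ((qj*u1) * (aj* v1) * (qk*w1)) = - s * a * b * (X * Xb) / ((qj*u1) * (aj* v1) * (qk*w1))"
    by (simp add: mult_ac)
  also have "\<dots> = - s * a * b * (M * w1 + QZ * u1 * v1) / ((qj*u1) * (aj* v1) * (qk*w1))" by (simp only: eq)
  also have "\<dots> = M * (- s * a * b / ((qj*u1) * (aj* v1) * qk)) - QZ * (s * a * b / (qj * aj * (qk*w1)))"
    using assms by (simp add: field_simps)
  finally show ?thesis .
qed

lemma P_gen:
  assumes "\<And>n. qpoch A Q n \<noteq> 0" "\<And>n. qpoch Q Q n \<noteq> 0"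
  shows "PP A Q (2*j+k+3) (j+1) = (1 - A*Q^(2*j+k+2)) * PP A Q (2*j+k+2) (j+1) - Q^(k+1) * PP A Q (2*j+k+1) j"
proof -
  have e: "2*j+k+3-(j+1) = Suc (j+k+1)" "2*j+k+3-2*(j+1) = Suc k" "2*j+k+2-(j+1) = j+k+1"
     "2*j+k+2-2*(j+1) = k" "2*j+k+1-j = j+k+1" "2*j+k+1-2*j = Suc k" "j+1 = Suc j" by simp_all
  have n: "qpoch A Q (j+k+1) \<noteq> 0" "qpoch Q Q (j+k+1) \<noteq> 0" "qpoch A Q j \<noteq> 0" "qpoch Q Q j \<noteq> 0" "qpoch Q Q k \<noteq> 0"
    "qpoch A Q (Suc j) \<noteq> 0" "qpoch Q Q (Suc j) \<noteq> 0" "qpoch Q Q (Suc k) \<noteq> 0" using assms by auto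
  have n2: "1 - A * Q^j \<noteq> 0" "1 - Q * Q^j \<noteq> 0" "1 - Q * Q^k \<noteq> 0"
    using n(6,7,8) unfolding qpoch_Suc by auto
  have pw: "Q^(j+k+1) = Q^j*Q^k*Q" "Q^(2*j+k+2) = Q^j*Q^j*Q^k*Q*Q" "Q^(k+1) = Q*Q^k"
    by (simp_all add: power_add mult_2)
  have eq: "(1-A*(Q^j*Q^k*Q))*(1-Q*(Q^j*Q^k*Q)) = (1 - A*(Q^j*Q^j*Q^k*Q*Q))*(1-Q*Q^k) + (Q*Q^k)*(1-Q*Q^j)*(1-A*Q^j)"
    by algebra
  have ex: "qpoch A Q (Suc (Suc (j+k))) = qpoch A Q (Suc (j+k)) * (1 - A*(Q^j*Q^k*Q))"
    "qpoch Q Q (Suc (Suc (j+k))) = qpoch Q Q (Suc (j+k)) * (1 - Q*(Q^j*Q^k*Q))"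
    "qpoch Q Q (Suc k) = qpoch Q Q k * (1 - Q * Q^k)"
    by (simp_all only: qpoch_Suc) (simp_all add: power_add)
  show ?thesis unfolding PP_def e qpoch_Suc power_Suc pw
    using P_alg[OF n(1-5) n2(2,1,3) eq, of "(-1)^j"] by (simp add: ex)
qed

lemma P_zero: assumes "\<And>n. qpoch Q Q n \<noteq> 0"
  shows "PP A Q (Suc m) 0 = (1 - A*Q^m) * PP A Q m 0"
proof -
  have "qpoch Q Q (Suc m) \<noteq> 0" "qpoch Q Q m \<noteq> 0" using assms by auto
  then show ?thesis unfolding PP_def by (simp add: qpoch_Suc)
qed

lemma P_edge: assumes "\<And>n. qpoch A Q n \<noteq> 0" "\<And>n. qpoch Q Q n \<noteq> 0"
  shows "PP A Q (2*j+2) (j+1) = - PP A Q (2*j) j"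
proof -
  have e: "2*j+2-(j+1) = j+1" "2*j+2-2*(j+1) = 0" "2*j-j = j" "2*j-2*j = 0" by simp_all
  show ?thesis unfolding PP_def e using assms[of j] assms[of "j+1"] by simp
qed

lemma qpow_eq: "a = b \<Longrightarrow> qpow q a = qpow q b" by simp

lemma W1: "qpow q (of_nat(2*(n+1))) * qpow q (ww \<nu> (n+2) i) = qpow q (-(\<nu>+1)) * qpow q (ww \<nu> (n+1) i)"
  unfolding qpow_add[symmetric] by (rule qpow_eq) (simp add: ww_def algebra_simps)

lemma W2: "qpow q (-(\<nu>+2)) * qpow q (ww \<nu> (2*j+k) j) = qpow q (of_nat (2*(2*j+k+1))) * qpow q (ww \<nu> (2*j+k+2) (j+1)) * qpow q (of_nat (2*k))"
  unfolding qpow_add[symmetric] by (rule qpow_eq) (simp add: ww_def algebra_simps)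

definition cc :: "real \<Rightarrow> complex \<Rightarrow> nat \<Rightarrow> nat \<Rightarrow> complex" where
  "cc q \<nu> m i = qpow q (ww \<nu> m i) * PP (qpow q (2*\<nu>)) (of_real (q^2)) m i"

lemma nzQ: assumes "0 < q" "q < 1" shows "qpoch (of_real (q^2)) (of_real (q^2)) n \<noteq> 0"
proof (rule qpoch_nz)
  fix j
  have "q ^ Suc (2*j+1) < 1" using assms by (rule power_Suc_less_one)
  then have "q ^ (2 * Suc j) < 1" by simp
  then have "q^2 * (q^2)^j \<noteq> 1" by (simp add: power_mult[symmetric] power_add[symmetric] mult_2)
  then show "of_real (q^2) * of_real (q^2) ^ j \<noteq> (1::complex)"
    by (metis of_real_eq_1_iff of_real_mult of_real_power)
qed

lemma Qpow: assumes "0 < q" shows "(of_real (q^2) :: complex) ^ k = qpow q (of_nat (2*k))"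
  by (subst qpow_nat[OF assms]) (simp add: power_mult)

lemma nzA: assumes "0 < q" "\<And>i::nat. qpow q (2 * \<nu> + 2 * of_nat i) \<noteq> 1"
  shows "qpoch (qpow q (2*\<nu>)) (of_real (q^2)) n \<noteq> 0"
proof (rule qpoch_nz)
  fix j
  show "qpow q (2*\<nu>) * of_real (q^2) ^ j \<noteq> 1"
    using assms(2)[of j] unfolding Qpow[OF assms(1)] qpow_add[symmetric] by simp
qed

lemma coef:
  assumes q: "0 < q" "q < 1" and h: "\<And>i::nat. qpow q (2 * \<nu> + 2 * of_nat i) \<noteq> 1"
    and i: "i \<le> Suc (n div 2)"
  shows "of_real (q^(2*(n+1))) * cc q \<nu> (n+2) i =
     qpow q (-(\<nu>+1)) * (1 - qpow q (2*(\<nu> + of_nat (n+1)))) * (if 2*i \<le> n+1 then cc q \<nu> (n+1) i else 0)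
     - qpow q (-(\<nu>+2)) * (if i = 0 then 0 else cc q \<nu> n (i-1))"
proof -
  define A where "A = qpow q (2*\<nu>)"
  define Q where "Q = (of_real (q^2) :: complex)"
  have nA: "\<And>n. qpoch A Q n \<noteq> 0" unfolding A_def Q_def using nzA[OF q(1) h] .
  have nQ: "\<And>n. qpoch Q Q n \<noteq> 0" unfolding Q_def using nzQ[OF q] .
  have L: "of_real (q^(2*(n+1))) = qpow q (of_nat (2*(n+1)))" by (subst qpow_nat[OF q(1)]) simp
  have AQ: "qpow q (2*(\<nu> + of_nat (n+1))) = A * Q^(n+1)"
    unfolding A_def Q_def Qpow[OF q(1)] qpow_add[symmetric] by (rule qpow_eq) (simp add: algebra_simps)
  have cc: "\<And>m i. cc q \<nu> m i = qpow q (ww \<nu> m i) * PP A Q m i" unfolding cc_def A_def Q_def ..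
  show ?thesis
  proof (cases i)
    case 0
    have "PP A Q (Suc (n+1)) 0 = (1 - A*Q^(n+1)) * PP A Q (n+1) 0" by (rule P_zero[OF nQ])
    then show ?thesis unfolding 0 L AQ cc using W1[of q n \<nu> 0]
      by (simp add: mult_ac)
  next
    case (Suc j)
    have "2*j \<le> n" using i unfolding Suc by presburger
    then obtain k where n: "n = 2*j + k" using le_Suc_ex by blast
    define W where "W = qpow q (of_nat (2*(n+1))) * qpow q (ww \<nu> (n+2) (j+1))"
    show ?thesis
    proof (cases k)
      case 0
      have P: "PP A Q (n+2) (j+1) = - PP A Q n j" using P_edge[OF nA nQ, of j] by (simp add: n 0)
      have w2: "qpow q (-(\<nu>+2)) * qpow q (ww \<nu> n j) = W" using W2[of q \<nu> j 0] by (simp add: n 0 W_def)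
      have "\<not> 2*i \<le> n+1" using n 0 Suc by simp
      then show ?thesis unfolding L cc Suc using P w2
        by (simp add: W_def)
    next
      case (Suc k')
      have P: "PP A Q (n+2) (j+1) = (1 - A*Q^(n+1)) * PP A Q (n+1) (j+1) - Q^(k'+1) * PP A Q n j"
        using P_gen[OF nA nQ, of j k'] by (simp add: n Suc numeral_3_eq_3)
      have w1: "qpow q (-(\<nu>+1)) * qpow q (ww \<nu> (n+1) (j+1)) = W" using W1[of q n \<nu> "j+1"] by (simp add: W_def)
      have w2: "qpow q (-(\<nu>+2)) * qpow q (ww \<nu> n j) = W * Q^(k'+1)"
      proof -
        have QQ: "Q^(k'+1) = qpow q (of_nat (2*(k'+1)))" unfolding Q_def by (rule Qpow[OF q(1)])
        show ?thesis using W2[of q \<nu> j k] unfolding QQ by (simp add: n Suc W_def)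
      qed
      have "2*i \<le> n+1" using n Suc \<open>i = Suc j\<close> by simp
      then have E1: "?thesis = (W * PP A Q (n+2) (j+1) = qpow q (-(\<nu>+1)) * (1 - A*Q^(n+1)) * (qpow q (ww \<nu> (n+1) (j+1)) * PP A Q (n+1) (j+1))
         - qpow q (-(\<nu>+2)) * (qpow q (ww \<nu> n j) * PP A Q n j))"
        unfolding L cc AQ \<open>i = Suc j\<close> by (simp add: W_def mult.assoc)
      have E2: "(W * PP A Q (n+2) (j+1) = qpow q (-(\<nu>+1)) * (1 - A*Q^(n+1)) * (qpow q (ww \<nu> (n+1) (j+1)) * PP A Q (n+1) (j+1))
         - qpow q (-(\<nu>+2)) * (qpow q (ww \<nu> n j) * PP A Q n j)) = (W * PP A Q (n+2) (j+1) = (1 - A*Q^(n+1)) * (qpow q (-(\<nu>+1)) * qpow q (ww \<nu> (n+1) (j+1))) * PP A Q (n+1) (j+1)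
         - (qpow q (-(\<nu>+2)) * qpow q (ww \<nu> n j)) * PP A Q n j)"
        by (simp add: mult_ac)
      have E3: "W * PP A Q (n+2) (j+1) = (1 - A*Q^(n+1)) * (qpow q (-(\<nu>+1)) * qpow q (ww \<nu> (n+1) (j+1))) * PP A Q (n+1) (j+1)
         - (qpow q (-(\<nu>+2)) * qpow q (ww \<nu> n j)) * PP A Q n j" unfolding w1 w2 P by (simp add: algebra_simps)
      show ?thesis using E1 E2 E3 by blast
    qed
  qed
qed

lemma r_eq: "r_poly q \<nu> m x = (\<Sum>i=0..m div 2. cc q \<nu> m i / x^(m-2*i))"
  unfolding r_poly_def cc_def c_eq[symmetric] by (rule sum.cong) auto

lemma rec_step:
  assumes q: "0 < q" "q < 1" and h: "\<And>i::nat. qpow q (2 * \<nu> + 2 * of_nat i) \<noteq> 1"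
    and x: "x \<noteq> 0"
  shows "of_real (q ^ (2 * Suc n)) * r_poly q \<nu> (Suc n + 1) x =
           qpow q (- (\<nu> + 1)) * (1 - qpow q (2 * (\<nu> + of_nat (Suc n)))) / x * r_poly q \<nu> (Suc n) x
           - qpow q (- (\<nu> + 2)) * r_poly q \<nu> (Suc n - 1) x"
proof -
  define N where "N = Suc (n div 2)"
  define K1 where "K1 = qpow q (-(\<nu>+1)) * (1 - qpow q (2*(\<nu> + of_nat (n+1))))"
  define K2 where "K2 = qpow q (-(\<nu>+2))"
  define f1 where "f1 i = (if 2*i \<le> n+1 then cc q \<nu> (n+1) i else 0)" for i
  define f2 where "f2 i = (if i = 0 then 0 else cc q \<nu> n (i-1))" for i
  have N: "(n+2) div 2 = N" unfolding N_def by simp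
  have L: "of_real (q ^ (2 * Suc n)) * r_poly q \<nu> (Suc n + 1) x
     = (\<Sum>i=0..N. K1 * f1 i / x^(n+2-2*i)) - (\<Sum>i=0..N. K2 * f2 i / x^(n+2-2*i))"
  proof -
    have "of_real (q ^ (2 * Suc n)) * r_poly q \<nu> (Suc n + 1) x
       = (\<Sum>i=0..N. of_real (q^(2*(n+1))) * cc q \<nu> (n+2) i / x^(n+2-2*i))"
      unfolding r_eq sum_distrib_left by (simp add: N[symmetric] numeral_2_eq_2)
    also have "\<dots> = (\<Sum>i=0..N. (K1 * f1 i - K2 * f2 i) / x^(n+2-2*i))"
    proof (rule sum.cong)
      fix i assume "i \<in> {0..N}"
      then have "i \<le> Suc (n div 2)" unfolding N_def by simp
      from coef[OF q h this] have "of_real (q^(2*(n+1))) * cc q \<nu> (n+2) i = K1 * f1 i - K2 * f2 i"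
        unfolding K1_def K2_def f1_def f2_def .
      then show "of_real (q^(2*(n+1))) * cc q \<nu> (n+2) i / x^(n+2-2*i) = (K1 * f1 i - K2 * f2 i) / x^(n+2-2*i)"
        by simp
    qed simp
    also have "\<dots> = (\<Sum>i=0..N. K1 * f1 i / x^(n+2-2*i)) - (\<Sum>i=0..N. K2 * f2 i / x^(n+2-2*i))"
      by (simp add: diff_divide_distrib sum_subtractf)
    finally show ?thesis .
  qed
  have S1: "(\<Sum>i=0..N. K1 * f1 i / x^(n+2-2*i)) = K1 / x * r_poly q \<nu> (Suc n) x"
  proof -
    have "(\<Sum>i=0..N. K1 * f1 i / x^(n+2-2*i)) = (\<Sum>i\<in>{i\<in>{0..N}. 2*i \<le> n+1}. K1 * cc q \<nu> (n+1) i / x^(n+2-2*i))"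
      by (subst sum.inter_filter) (auto intro!: sum.cong simp: f1_def)
    also have "{i\<in>{0..N}. 2*i \<le> n+1} = {0..Suc n div 2}" unfolding N_def by auto
    also have "(\<Sum>i=0..Suc n div 2. K1 * cc q \<nu> (n+1) i / x^(n+2-2*i)) = (\<Sum>i=0..Suc n div 2. K1 / x * (cc q \<nu> (Suc n) i / x^(Suc n-2*i)))"
    proof (rule sum.cong)
      fix i assume "i \<in> {0..Suc n div 2}"
      then have "n+2-2*i = Suc (Suc n - 2*i)" by auto
      then show "K1 * cc q \<nu> (n+1) i / x^(n+2-2*i) = K1 / x * (cc q \<nu> (Suc n) i / x^(Suc n-2*i))"
        by simp
    qed simp
    finally show ?thesis unfolding r_eq sum_distrib_left .
  qed
  have S2: "(\<Sum>i=0..N. K2 * f2 i / x^(n+2-2*i)) = K2 * r_poly q \<nu> n x"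
  proof -
    have "(\<Sum>i=0..N. K2 * f2 i / x^(n+2-2*i)) = K2 * f2 0 / x^(n+2) + (\<Sum>i=Suc 0..Suc (n div 2). K2 * f2 i / x^(n+2-2*i))"
      unfolding N_def by (subst sum.atLeast_Suc_atMost) simp_all
    also have "\<dots> = (\<Sum>j=0..n div 2. K2 * f2 (Suc j) / x^(n+2-2*Suc j))"
      unfolding sum.shift_bounds_cl_Suc_ivl by (simp add: f2_def)
    also have "\<dots> = (\<Sum>j=0..n div 2. K2 * (cc q \<nu> n j / x^(n-2*j)))"
      by (rule sum.cong) (simp_all add: f2_def)
    finally show ?thesis unfolding r_eq sum_distrib_left .
  qed
  have "of_real (q ^ (2 * Suc n)) * r_poly q \<nu> (Suc n + 1) x = K1 / x * r_poly q \<nu> (Suc n) x - K2 * r_poly q \<nu> n x"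
    unfolding L S1 S2 ..
  then show ?thesis by (simp add: K1_def K2_def)
qed

theorem mainTheorem18:
  fixes q :: real and \<nu> :: complex
  assumes "0 < q" and "q < 1"
    and "\<And>i::nat. qpow q (2 * \<nu> + 2 * of_nat i) \<noteq> 1"
  shows "(\<forall>x. r_poly q \<nu> 0 x = 1)
    \<and> (\<forall>x. r_poly q \<nu> 1 x = qpow q (- (\<nu> + 1)) * (1 - qpow q (2 * \<nu>)) / x)
    \<and> (\<forall>m::nat. \<forall>x::complex. m \<ge> 1 \<longrightarrow> x \<noteq> 0 \<longrightarrow>
         of_real (q ^ (2 * m)) * r_poly q \<nu> (m + 1) x =
           qpow q (- (\<nu> + 1)) * (1 - qpow q (2 * (\<nu> + of_nat m))) / x * r_poly q \<nu> m x
           - qpow q (- (\<nu> + 2)) * r_poly q \<nu> (m - 1) x)"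
proof (intro conjI allI impI)
  fix x :: complex
  show "r_poly q \<nu> 0 x = 1" by (simp add: r_poly_def a_coef_def)
next
  fix x :: complex
  have "qpoch (of_real (q^2)) (of_real (q^2)) 1 \<noteq> 0" using nzQ[OF assms(1,2)] .
  then show "r_poly q \<nu> 1 x = qpow q (- (\<nu> + 1)) * (1 - qpow q (2 * \<nu>)) / x"
    by (simp add: r_poly_def a_coef_def qpoch_def add.commute)
next
  fix m :: nat and x :: complex
  assume "1 \<le> m" "x \<noteq> 0"
  then obtain n where "m = Suc n" by (cases m) auto
  then show "of_real (q ^ (2 * m)) * r_poly q \<nu> (m + 1) x =
           qpow q (- (\<nu> + 1)) * (1 - qpow q (2 * (\<nu> + of_nat m))) / x * r_poly q \<nu> m x
           - qpow q (- (\<nu> + 2)) * r_poly q \<nu> (m - 1) x"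
    using rec_step[OF assms \<open>x \<noteq> 0\<close>, of n] by simp
qed
end
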